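(* Let $C\ge2$. For a matrix $\boldsymbol{M}=[\boldsymbol{\mu}_1,\dots,\boldsymbol{\mu}_C]\in\mathbb{R}^{C\times C}$, a matrix $\boldsymbol{W}\in\mathbb{R}^{C\times C}$ with rows $\boldsymbol{w}_c^\top$ and a vector $\boldsymbol{b}\in\mathbb{R}^C$, consider the observation $\boldsymbol{h}=\boldsymbol{\mu}_\gamma+\boldsymbol{z}$, where $\gamma\sim\mathrm{Unif}\{1,\dots,C\}$ and $\boldsymbol{z}\sim\mathcal{N}(\mathbf{0},\sigma^2\boldsymbol{I}_C)$ are independent, the decision rule $\hat\gamma(\boldsymbol{h})=\arg\max_c\langle\boldsymbol{w}_c,\boldsymbol{h}\rangle+b_c$, and the error exponent $\beta(\boldsymbol{M},\boldsymbol{W},\boldsymbol{b})=-\lim_{\sigma\to0}\sigma^2\log P_\sigma\{\hat\gamma(\boldsymbol{h})\ne\gamma\}$. Then $$\beta^\star:=\max_{\boldsymbol{M},\boldsymbol{W},\boldsymbol{b}}\beta(\boldsymbol{M},\boldsymbol{W},\boldsymbol{b})\ \text{ s.t. }\ \|\boldsymbol{\mu}_c\|_2\le1\ \forall c\quad\text{equals}\quad \frac{C}{C-1}\cdot\frac14.$$ Moreover, with $\boldsymbol{M}^\star=\sqrt{\frac{C}{C-1}}\left(\boldsymbol{I}-\frac1C\mathbf{1}\mathbf{1}^\top\right)$, one has $\beta(\boldsymbol{M}^\star,\boldsymbol{M}^\star,\mathbf{0})=\beta^\star$. Every $\boldsymbol{M}$ with columns of norm at most $1$ for which some $\boldsymbol{W},\boldsymbol{b}$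 achieve $\beta(\boldsymbol{M},\boldsymbol{W},\boldsymbol{b})=\beta^\star$ is of the form $\boldsymbol{M}=\boldsymbol{U}\boldsymbol{M}^\star$ for some orthogonal $\boldsymbol{U}\in\mathbb{R}^{C\times C}$, and for such $\boldsymbol{M}$ the choice $\boldsymbol{W}=\boldsymbol{M}^\star\boldsymbol{U}^\top$, $\boldsymbol{b}=\mathbf{0}$ satisfies $\beta(\boldsymbol{M},\boldsymbol{W},\boldsymbol{b})=\beta^\star$.
   Context: $\mathbf{1}$ is the all-ones vector in $\mathbb{R}^C$; $\boldsymbol{M}^\star$ is the standard simplex equiangular tight frame. The maximum is over all $C\times C$ matrices $\boldsymbol{M}$ with columns of Euclidean norm at most $1$, all $C\times C$ matrices $\boldsymbol{W}$ and all $\boldsymbol{b}\in\mathbb{R}^C$. *)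

theory Defs
  imports "HOL-Probability.Probability"
begin

definition gauss_vec :: "real \<Rightarrow> (real^'c) measure" where
  "gauss_vec \<sigma> = density lborel (\<lambda>z. ennreal (\<Prod>i\<in>UNIV. normal_density 0 \<sigma> (z $ i)))"

text \<open>Decision rule errs on true label g at observation h unless g is the unique
  maximiser of the scores  <w_c, h> + b_c  (ties counted as errors).\<close>
definition misclassified :: "real^'c^'c \<Rightarrow> real^'c \<Rightarrow> 'c \<Rightarrow> real^'c \<Rightarrow> bool" where
  "misclassified W b g h \<longleftrightarrow>
     (\<exists>c. c \<noteq> g \<and> (W $ c) \<bullet> h + b $ c \<ge> (W $ g) \<bullet> h + b $ g)"

text \<open>Error probability: h = mu_gamma + z, gamma uniform on the C classes,
  z ~ N(0, sigma^2 I) independent; mu_gamma is column gamma of M.\<close>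
definition err_prob :: "real \<Rightarrow> real^'c^'c \<Rightarrow> real^'c^'c \<Rightarrow> real^'c \<Rightarrow> real" where
  "err_prob \<sigma> M W b =
     (\<Sum>g\<in>UNIV. measure (gauss_vec \<sigma>) {z. misclassified W b g (column g M + z)})
       / real CARD('c)"

definition has_error_exponent :: "real^'c^'c \<Rightarrow> real^'c^'c \<Rightarrow> real^'c \<Rightarrow> real \<Rightarrow> bool" where
  "has_error_exponent M W b \<beta> \<longleftrightarrow>
     ((\<lambda>\<sigma>. - (\<sigma>\<^sup>2 * ln (err_prob \<sigma> M W b))) \<longlongrightarrow> \<beta>) (at_right 0)"

definition simplex_etf :: "real^'c^'c" where
  "simplex_etf = sqrt (real CARD('c) / (real CARD('c) - 1)) *\<^sub>R
     (mat 1 - (1 / real CARD('c)) *\<^sub>R (\<chi> i j. 1))"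

end

theory Submission
  imports Defs "HOL-Real_Asymp.Real_Asymp"
begin

lemma Basis_vec_real: "(Basis :: (real^'c) set) = (\<lambda>i. axis i 1) ` UNIV"
  by (auto simp: Basis_vec_def)

lemma nn_integral_vec_prod:
  fixes F :: "'c::finite \<Rightarrow> real \<Rightarrow> ennreal"
  assumes [measurable]: "\<And>i. F i \<in> borel_measurable borel"
  shows "(\<integral>\<^sup>+z. (\<Prod>i\<in>UNIV. F i (z $ i)) \<partial>(lborel :: (real^'c) measure)) = (\<Prod>i\<in>UNIV. \<integral>\<^sup>+x. F i x \<partial>lborel)"
proof -
  define f where "f b = F (THE i. b = axis i (1::real))" for b :: "real^'c"
  have fa: "f (axis i 1) = F i" for i
    unfolding f_def by (rule arg_cong[where f=F]) (auto simp: axis_eq_axis)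
  have inj: "inj (\<lambda>i::'c. axis i (1::real))" by (auto simp: inj_def axis_eq_axis)
  have "(\<Prod>b\<in>Basis. f b ((z::real^'c) \<bullet> b)) = (\<Prod>i\<in>UNIV. F i (z $ i))" for z
    by (simp add: Basis_vec_real prod.reindex[OF inj] fa inner_axis)
  moreover have "(\<Prod>b\<in>(Basis::(real^'c) set). \<integral>\<^sup>+x. f b x \<partial>lborel) = (\<Prod>i\<in>UNIV. \<integral>\<^sup>+x. F i x \<partial>lborel)"
    by (simp add: Basis_vec_real prod.reindex[OF inj] fa)
  moreover have "(\<integral>\<^sup>+z. (\<Prod>b\<in>Basis. f b ((z::real^'c) \<bullet> b)) \<partial>lborel) = (\<Prod>b\<in>(Basis::(real^'c) set). \<integral>\<^sup>+x. f b x \<partial>lborel)"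
    by (rule nn_integral_lborel_prod) (auto simp: Basis_vec_real fa)
  ultimately show ?thesis by simp
qed

lemma nn_integral_normal_exp:
  assumes "\<sigma> > 0"
  shows "(\<integral>\<^sup>+x. ennreal (normal_density 0 \<sigma> x * exp (s * x)) \<partial>lborel) = ennreal (exp (s^2 * \<sigma>^2 / 2))"
proof -
  have eq: "normal_density 0 \<sigma> x * exp (s * x) = exp (s^2 * \<sigma>^2 / 2) * normal_density (s * \<sigma>^2) \<sigma> x" for x
  proof -
    have "-(x - 0)\<^sup>2/ (2 * \<sigma>\<^sup>2) + s * x = s^2 * \<sigma>^2 / 2 + (-(x - s * \<sigma>^2)\<^sup>2/ (2 * \<sigma>\<^sup>2))"
      using assms by (simp add: field_simps power2_eq_square)
    then show ?thesis unfolding normal_density_def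
      by (simp add: exp_add[symmetric] mult_ac)
  qed
  have "(\<integral>\<^sup>+x. ennreal (normal_density (s * \<sigma>^2) \<sigma> x) \<partial>lborel) = 1"
    using assms by (subst nn_integral_eq_integral) auto
  then show ?thesis
    by (simp add: eq ennreal_mult nn_integral_cmult)
qed


lemma norm_sq_vec: "(norm (a::real^'c::finite))^2 = (\<Sum>i\<in>UNIV. (a$i)^2)"
  by (simp add: norm_vec_def L2_set_def sum_nonneg)

lemma sets_gauss[simp, measurable_cong]: "sets (gauss_vec \<sigma>) = sets borel"
  by (simp add: gauss_vec_def)

lemma space_gauss[simp]: "space (gauss_vec \<sigma>) = UNIV"
  by (simp add: gauss_vec_def)

lemma gauss_dens_meas[measurable]:
  "(\<lambda>z::real^'c. \<Prod>i\<in>UNIV. normal_density 0 \<sigma> (z $ i)) \<in> borel_measurable borel"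
  by measurable

lemma gauss_total:
  assumes "\<sigma> > 0"
  shows "emeasure (gauss_vec \<sigma> :: (real^'c::finite) measure) UNIV = 1"
proof -
  have "emeasure (gauss_vec \<sigma> :: (real^'c::finite) measure) UNIV
      = (\<integral>\<^sup>+z. (\<Prod>i\<in>UNIV. ennreal (normal_density 0 \<sigma> (z $ i))) \<partial>(lborel :: (real^'c) measure))"
    unfolding gauss_vec_def
    by (subst emeasure_density) (auto simp: prod_ennreal)
  also have "\<dots> = (\<Prod>i\<in>(UNIV::'c set). \<integral>\<^sup>+x. ennreal (normal_density 0 \<sigma> x) \<partial>lborel)"
    by (rule nn_integral_vec_prod) simp
  also have "\<dots> = 1"
    using assms by (subst nn_integral_eq_integral) auto
  finally show ?thesis .
qed

lemma gauss_prob: "\<sigma> > 0 \<Longrightarrow> prob_space (gauss_vec \<sigma> :: (real^'c::finite) measure)"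
  by (rule prob_spaceI) (simp add: gauss_total)

lemma chernoff:
  fixes a :: "real^'c::finite"
  assumes "\<sigma> > 0" "l \<ge> 0"
  shows "emeasure (gauss_vec \<sigma>) {z. a \<bullet> z \<ge> t} \<le> ennreal (exp (l^2 * (norm a)^2 * \<sigma>^2 / 2 - l * t))"
proof -
  let ?d = "\<lambda>z::real^'c. \<Prod>i\<in>UNIV. normal_density 0 \<sigma> (z $ i)"
  have "emeasure (gauss_vec \<sigma>) {z. a \<bullet> z \<ge> t} = (\<integral>\<^sup>+z. ennreal (?d z) * indicator {z. a \<bullet> z \<ge> t} z \<partial>lborel)"
    unfolding gauss_vec_def by (subst emeasure_density) auto
  also have "\<dots> \<le> (\<integral>\<^sup>+z. ennreal (?d z * exp (l * (a \<bullet> z - t))) \<partial>lborel)"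
  proof (rule nn_integral_mono)
    fix z :: "real^'c"
    show "ennreal (?d z) * indicator {z. a \<bullet> z \<ge> t} z \<le> ennreal (?d z * exp (l * (a \<bullet> z - t)))"
    proof (cases "a \<bullet> z \<ge> t")
      case True
      then have "1 \<le> exp (l * (a \<bullet> z - t))" using assms by simp
      then have "?d z * 1 \<le> ?d z * exp (l * (a \<bullet> z - t))"
        by (intro mult_left_mono) (auto intro: prod_nonneg)
      then show ?thesis using True by (auto intro!: ennreal_leI)
    qed auto
  qed
  also have "(\<lambda>z. ennreal (?d z * exp (l * (a \<bullet> z - t))))
      = (\<lambda>z. ennreal (exp (- l * t)) * (\<Prod>i\<in>UNIV. ennreal (normal_density 0 \<sigma> (z $ i) * exp ((l * a $ i) * z $ i))))"
  proof
    fix z :: "real^'c"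
    have "exp (l * (a \<bullet> z - t)) = exp (- l * t) * (\<Prod>i\<in>UNIV. exp ((l * a $ i) * z $ i))"
      by (simp add: inner_vec_def exp_sum[symmetric] exp_add[symmetric] sum_distrib_left algebra_simps)
    then show "ennreal (?d z * exp (l * (a \<bullet> z - t))) = ennreal (exp (- l * t)) * (\<Prod>i\<in>UNIV. ennreal (normal_density 0 \<sigma> (z $ i) * exp ((l * a $ i) * z $ i)))"
      by (simp add: prod_ennreal ennreal_mult[symmetric] prod.distrib mult_ac prod_nonneg)
  qed
  also have "(\<integral>\<^sup>+z. ennreal (exp (- l * t)) * (\<Prod>i\<in>UNIV. ennreal (normal_density 0 \<sigma> (z $ i) * exp ((l * a $ i) * z $ i))) \<partial>lborel)
     = ennreal (exp (- l * t)) * (\<Prod>i\<in>UNIV. \<integral>\<^sup>+x. ennreal (normal_density 0 \<sigma> x * exp ((l * a $ i) * x)) \<partial>lborel)"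
  proof -
    have "(\<integral>\<^sup>+z. (\<Prod>i\<in>UNIV. ennreal (normal_density 0 \<sigma> (z $ i) * exp ((l * a $ i) * z $ i))) \<partial>(lborel::(real^'c) measure))
      = (\<Prod>i\<in>UNIV. \<integral>\<^sup>+x. ennreal (normal_density 0 \<sigma> x * exp ((l * a $ i) * x)) \<partial>lborel)"
      by (rule nn_integral_vec_prod[where F="\<lambda>i x. ennreal (normal_density 0 \<sigma> x * exp ((l * a $ i) * x))"]) simp
    then show ?thesis by (subst nn_integral_cmult) auto
  qed
  also have "\<dots> = ennreal (exp (- l * t)) * (\<Prod>i\<in>UNIV. ennreal (exp ((l * a $ i)^2 * \<sigma>^2 / 2)))"
    using assms by (simp add: nn_integral_normal_exp)
  also have "\<dots> = ennreal (exp (l^2 * (norm a)^2 * \<sigma>^2 / 2 - l * t))"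
  proof -
    have "(norm a)^2 = (\<Sum>i\<in>UNIV. (a $ i)^2)"
      by (rule norm_sq_vec)
    then have "exp (l^2 * (norm a)^2 * \<sigma>^2 / 2 - l * t) = exp (- l * t) * (\<Prod>i\<in>UNIV. exp ((l * a $ i)^2 * \<sigma>^2 / 2))"
      by (simp add: exp_sum[symmetric] exp_add[symmetric] sum_distrib_left sum_divide_distrib power_mult_distrib algebra_simps)
    then show ?thesis by (simp add: prod_ennreal ennreal_mult'[symmetric] prod_nonneg)
  qed
  finally show ?thesis .
qed

lemma chernoff_opt:
  fixes a :: "real^'c::finite"
  assumes "\<sigma> > 0" "a \<noteq> 0" "t \<ge> 0"
  shows "measure (gauss_vec \<sigma>) {z. a \<bullet> z \<ge> t} \<le> exp (- (t^2 / (2 * (norm a)^2 * \<sigma>^2)))"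
proof -
  define l where "l = t / ((norm a)^2 * \<sigma>^2)"
  have l0: "l \<ge> 0" using assms by (simp add: l_def)
  have na: "norm a > 0" using assms by simp
  have eq: "l^2 * (norm a)^2 * \<sigma>^2 / 2 - l * t = - (t^2 / (2 * (norm a)^2 * \<sigma>^2))"
    using assms na by (simp add: l_def field_simps power2_eq_square)
  interpret prob_space "gauss_vec \<sigma> :: (real^'c) measure" using gauss_prob assms(1) .
  have "emeasure (gauss_vec \<sigma>) {z. a \<bullet> z \<ge> t} \<le> ennreal (exp (- (t^2 / (2 * (norm a)^2 * \<sigma>^2))))"
    using chernoff[OF assms(1) l0, where a=a and t=t] by (simp add: eq)
  then show ?thesis by (simp add: emeasure_eq_measure)
qed

lemma gauss_dens_eq:
  fixes z :: "real^'c::finite"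
  shows "(\<Prod>i\<in>UNIV. normal_density 0 \<sigma> (z $ i)) = (1 / sqrt (2 * pi * \<sigma>\<^sup>2)) ^ CARD('c) * exp (- ((norm z)^2) / (2 * \<sigma>^2))"
proof -
  have "(\<Prod>i\<in>UNIV. normal_density 0 \<sigma> (z $ i)) = (\<Prod>i\<in>UNIV. (1 / sqrt (2 * pi * \<sigma>\<^sup>2)) * exp (- ((z $ i)^2) / (2 * \<sigma>^2)))"
    unfolding normal_density_def by simp
  also have "\<dots> = (1 / sqrt (2 * pi * \<sigma>\<^sup>2)) ^ CARD('c) * (\<Prod>i\<in>UNIV. exp (- ((z $ i)^2) / (2 * \<sigma>^2)))"
    by (subst prod.distrib) simp
  also have "(\<Prod>i\<in>UNIV. exp (- ((z $ i)^2) / (2 * \<sigma>^2))) = exp (\<Sum>i\<in>UNIV. - ((z $ i)^2) / (2 * \<sigma>^2))"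
    by (simp add: exp_sum)
  also have "(\<Sum>i\<in>UNIV. - ((z $ i)^2) / (2 * \<sigma>^2)) = - ((norm z)^2) / (2 * \<sigma>^2)"
    by (simp add: norm_sq_vec sum_divide_distrib[symmetric] sum_negf)
  finally show ?thesis .
qed

lemma ball_lower:
  fixes x0 :: "real^'c::finite"
  assumes "\<sigma> > 0" "r > 0" "ball x0 r \<subseteq> S" "S \<in> sets borel"
  shows "measure (gauss_vec \<sigma>) S \<ge> measure lborel (ball x0 r) * ((1 / sqrt (2 * pi * \<sigma>\<^sup>2)) ^ CARD('c) * exp (- ((norm x0 + r)^2) / (2 * \<sigma>^2)))"
proof -
  interpret prob_space "gauss_vec \<sigma> :: (real^'c) measure" using gauss_prob assms(1) .
  define K where "K = (1 / sqrt (2 * pi * \<sigma>\<^sup>2)) ^ CARD('c) * exp (- ((norm x0 + r)^2) / (2 * \<sigma>^2))"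
  have K0: "K \<ge> 0" by (simp add: K_def)
  have "ennreal (K * measure lborel (ball x0 r)) = ennreal K * emeasure lborel (ball x0 r)"
    using emeasure_lborel_ball_finite[of x0 r] K0
    by (simp add: measure_def ennreal_mult ennreal_enn2real_if)
  also have "\<dots> = (\<integral>\<^sup>+z. ennreal K * indicator (ball x0 r) z \<partial>lborel)"
    by (simp add: nn_integral_cmult_indicator)
  also have "\<dots> \<le> (\<integral>\<^sup>+z. ennreal (\<Prod>i\<in>UNIV. normal_density 0 \<sigma> (z $ i)) * indicator (ball x0 r) z \<partial>lborel)"
  proof (rule nn_integral_mono)
    fix z :: "real^'c"
    show "ennreal K * indicator (ball x0 r) z \<le> ennreal (\<Prod>i\<in>UNIV. normal_density 0 \<sigma> (z $ i)) * indicator (ball x0 r) z"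
    proof (cases "z \<in> ball x0 r")
      case True
      have "norm z \<le> norm x0 + norm (z - x0)" by (rule norm_triangle_sub)
      moreover have "norm (z - x0) < r" using True by (simp add: dist_norm norm_minus_commute)
      ultimately have "norm z \<le> norm x0 + r" by linarith
      then have "(norm z)^2 \<le> (norm x0 + r)^2" by (intro power_mono) auto
      then have "exp (- ((norm x0 + r)^2) / (2 * \<sigma>^2)) \<le> exp (- ((norm z)^2) / (2 * \<sigma>^2))"
        using assms by (simp add: divide_right_mono)
      then have "K \<le> (\<Prod>i\<in>UNIV. normal_density 0 \<sigma> (z $ i))"
        unfolding K_def gauss_dens_eq by (intro mult_left_mono) auto
      then show ?thesis using True by (simp add: ennreal_leI)
    qed simp
  qed
  also have "\<dots> = emeasure (gauss_vec \<sigma>) (ball x0 r)"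
    unfolding gauss_vec_def by (subst emeasure_density) auto
  also have "\<dots> \<le> emeasure (gauss_vec \<sigma>) S"
    using assms by (intro emeasure_mono) auto
  also have "\<dots> = ennreal (measure (gauss_vec \<sigma>) S)" by (simp add: emeasure_eq_measure)
  finally have "K * measure lborel (ball x0 r) \<le> measure (gauss_vec \<sigma>) S"
    by (subst (asm) ennreal_le_iff) auto
  then show ?thesis by (simp add: K_def mult_ac)
qed



lemma sq_ln_lim: "((\<lambda>s::real. s^2 * ln s) \<longlongrightarrow> 0) (at_right 0)" by real_asymp

lemma sq_lim: "((\<lambda>s::real. s^2) \<longlongrightarrow> 0) (at_right 0)" by real_asymp

lemma exponent_upper_ev:
  fixes E :: "real \<Rightarrow> real" and D :: real and n :: nat
  assumes D: "D \<ge> 0"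
    and H: "\<And>r. r > 0 \<Longrightarrow> \<exists>m>0. \<forall>\<sigma>>0. E \<sigma> \<ge> m * (1/\<sigma>)^n * exp (- ((D + r)^2) / (2 * \<sigma>^2))"
    and e: "\<epsilon> > 0"
  shows "eventually (\<lambda>\<sigma>. - (\<sigma>^2 * ln (E \<sigma>)) \<le> D^2/2 + \<epsilon>) (at_right 0)"
proof -
  define r where "r = min 1 (\<epsilon> / (2 * D + 1))"
  have r0: "r > 0" using e D by (simp add: r_def)
  have r1: "r \<le> 1" and r2: "r \<le> \<epsilon> / (2 * D + 1)" by (auto simp: r_def)
  have "r * (2 * D + 1) \<le> \<epsilon>" using r2 D by (simp add: field_simps)
  moreover have "r * r \<le> r" using r1 r0 by (simp add: mult_le_cancel_left1)
  ultimately have rD: "(D + r)^2 / 2 \<le> D^2/2 + \<epsilon>/2"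
    by (simp add: power2_eq_square algebra_simps)
  obtain m where m0: "m > 0" and mb: "\<And>\<sigma>. \<sigma> > 0 \<Longrightarrow> E \<sigma> \<ge> m * (1/\<sigma>)^n * exp (- ((D + r)^2) / (2 * \<sigma>^2))"
    using H[OF r0] by blast
  have lim: "((\<lambda>\<sigma>. real n * (\<sigma>^2 * ln \<sigma>) - \<sigma>^2 * ln m) \<longlongrightarrow> 0) (at_right 0)"
    using tendsto_diff[OF tendsto_mult[OF tendsto_const sq_ln_lim] tendsto_mult[OF sq_lim tendsto_const]]
    by simp
  have ev1: "eventually (\<lambda>\<sigma>. real n * (\<sigma>^2 * ln \<sigma>) - \<sigma>^2 * ln m < \<epsilon>/2) (at_right 0)"
    by (rule order_tendstoD(2)[OF lim]) (simp add: e)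
  have ev2: "eventually (\<lambda>\<sigma>::real. \<sigma> > 0) (at_right 0)"
    by (simp add: eventually_at_right_less)
  show ?thesis
    using ev1 ev2
  proof eventually_elim
    case (elim \<sigma>)
    let ?L = "m * (1/\<sigma>)^n * exp (- ((D + r)^2) / (2 * \<sigma>^2))"
    have L0: "?L > 0" using m0 elim by simp
    have "ln ?L \<le> ln (E \<sigma>)" using mb[OF elim(2)] L0 by simp
    moreover have "ln ?L = ln m - real n * ln \<sigma> - (D + r)^2 / (2 * \<sigma>^2)"
      using m0 elim by (simp add: ln_mult ln_realpow ln_div)
    ultimately have "ln m - real n * ln \<sigma> - (D + r)^2 / (2 * \<sigma>^2) \<le> ln (E \<sigma>)" by simp
    then have "\<sigma>^2 * (ln m - real n * ln \<sigma> - (D + r)^2 / (2 * \<sigma>^2)) \<le> \<sigma>^2 * ln (E \<sigma>)"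
      by (intro mult_left_mono) auto
    moreover have "\<sigma>^2 * (ln m - real n * ln \<sigma> - (D + r)^2 / (2 * \<sigma>^2)) = \<sigma>^2 * ln m - real n * (\<sigma>^2 * ln \<sigma>) - (D + r)^2 / 2"
      using elim by (simp add: field_simps)
    ultimately show ?case using elim(1) rD by linarith
  qed
qed

lemma exponent_lower_ev:
  fixes E :: "real \<Rightarrow> real"
  assumes K: "K > 0"
    and H: "\<And>\<sigma>. \<sigma> > 0 \<Longrightarrow> 0 < E \<sigma> \<and> E \<sigma> \<le> K * exp (- (B / \<sigma>^2))"
    and e: "\<epsilon> > 0"
  shows "eventually (\<lambda>\<sigma>. - (\<sigma>^2 * ln (E \<sigma>)) \<ge> B - \<epsilon>) (at_right 0)"
proof -
  have lim: "((\<lambda>\<sigma>. \<sigma>^2 * ln K) \<longlongrightarrow> 0) (at_right 0)"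
    using tendsto_mult[OF sq_lim tendsto_const] by simp
  have ev1: "eventually (\<lambda>\<sigma>. \<sigma>^2 * ln K < \<epsilon>) (at_right 0)"
    using order_tendstoD(2)[OF lim] e by simp
  have ev2: "eventually (\<lambda>\<sigma>::real. \<sigma> > 0) (at_right 0)"
    by (simp add: eventually_at_right_less)
  show ?thesis
    using ev1 ev2
  proof eventually_elim
    case (elim \<sigma>)
    have "ln (E \<sigma>) \<le> ln (K * exp (- (B / \<sigma>^2)))" using H[OF elim(2)] K by simp
    also have "\<dots> = ln K - B / \<sigma>^2" using K by (simp add: ln_mult)
    finally have "\<sigma>^2 * ln (E \<sigma>) \<le> \<sigma>^2 * (ln K - B / \<sigma>^2)"
      by (intro mult_left_mono) auto
    also have "\<dots> = \<sigma>^2 * ln K - B" using elim by (simp add: field_simps)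
    finally show ?case using elim(1) by linarith
  qed
qed

lemma limit_le_of_ev:
  assumes "(f \<longlongrightarrow> (\<beta>::real)) (at_right (0::real))"
    and "\<And>\<epsilon>. \<epsilon> > 0 \<Longrightarrow> eventually (\<lambda>\<sigma>. f \<sigma> \<le> A + \<epsilon>) (at_right 0)"
  shows "\<beta> \<le> A"
proof (rule field_le_epsilon)
  fix e :: real assume "e > 0"
  show "\<beta> \<le> A + e"
    by (rule tendsto_upperbound[OF assms(1) assms(2)[OF \<open>e > 0\<close>]]) simp
qed

lemma limit_of_ev:
  assumes "\<And>\<epsilon>. \<epsilon> > 0 \<Longrightarrow> eventually (\<lambda>\<sigma>. f \<sigma> \<le> A + \<epsilon>) (at_right (0::real))"
    and "\<And>\<epsilon>. \<epsilon> > 0 \<Longrightarrow> eventually (\<lambda>\<sigma>. f \<sigma> \<ge> A - \<epsilon>) (at_right (0::real))"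
  shows "(f \<longlongrightarrow> (A::real)) (at_right 0)"
proof (rule tendstoI)
  fix e :: real assume e: "e > 0"
  have e2: "e/2 > 0" using e by simp
  show "eventually (\<lambda>\<sigma>. dist (f \<sigma>) A < e) (at_right 0)"
    using assms(1)[OF e2] assms(2)[OF e2]
  proof eventually_elim
    case (elim \<sigma>)
    then show ?case using e by (simp add: dist_real_def abs_less_iff)
  qed
qed



definition errset :: "real^'c^'c \<Rightarrow> real^'c^'c \<Rightarrow> real^'c \<Rightarrow> 'c::finite \<Rightarrow> (real^'c) set" where
  "errset M W b g = {z. misclassified W b g (column g M + z)}"

lemma errset_meas[measurable]: "errset M W b g \<in> sets borel"
  unfolding errset_def misclassified_def by measurable

lemma err_prob_ge:
  fixes M W :: "real^'c::finite^'c" and b :: "real^'c"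
  assumes "\<sigma> > 0"
  shows "err_prob \<sigma> M W b \<ge> measure (gauss_vec \<sigma>) (errset M W b g) / real CARD('c)"
proof -
  have "measure (gauss_vec \<sigma>) (errset M W b g) \<le> (\<Sum>g\<in>UNIV. measure (gauss_vec \<sigma>) (errset M W b g))"
    by (rule member_le_sum) auto
  then show ?thesis unfolding err_prob_def errset_def
    by (simp add: divide_right_mono)
qed

lemma half_ball:
  fixes a :: "real^'c::finite"
  assumes "a \<noteq> 0 \<or> t \<le> 0" "r > 0"
  shows "\<exists>x0. norm x0 \<le> (if a = 0 then 0 else max t 0 / norm a) + r \<and> ball x0 r \<subseteq> {z. a \<bullet> z \<ge> t}"
proof (cases "a = 0")
  case True
  then show ?thesis using assms by (intro exI[of _ 0]) auto
next
  case False
  then have na: "norm a > 0" by simp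
  define x0 where "x0 = ((max t 0 / norm a + r) / norm a) *\<^sub>R a"
  have nx: "norm x0 = max t 0 / norm a + r"
    using na assms by (simp add: x0_def)
  have ax: "a \<bullet> x0 = max t 0 + r * norm a"
    using na by (simp add: x0_def power2_norm_eq_inner[symmetric] field_simps power2_eq_square)
  have "a \<bullet> z \<ge> t" if "z \<in> ball x0 r" for z
  proof -
    have "norm (z - x0) < r" using that by (simp add: dist_norm norm_minus_commute)
    then have "\<bar>a \<bullet> (z - x0)\<bar> \<le> norm a * r"
      using Cauchy_Schwarz_ineq2[of a "z - x0"] na
      by (meson less_imp_le mult_left_mono norm_ge_zero order_trans)
    then have "a \<bullet> z \<ge> a \<bullet> x0 - norm a * r" by (simp add: inner_diff_right abs_le_iff)
    then show ?thesis using ax by (simp add: mult.commute)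
  qed
  then show ?thesis using False nx by (intro exI[of _ x0]) auto
qed

lemma half_sub:
  fixes M W :: "real^'c::finite^'c" and b :: "real^'c"
  assumes "c \<noteq> g"
  shows "{z. (W$c - W$g) \<bullet> z \<ge> (W$g - W$c) \<bullet> column g M + b$g - b$c} \<subseteq> errset M W b g"
proof
  fix z assume "z \<in> {z. (W$c - W$g) \<bullet> z \<ge> (W$g - W$c) \<bullet> column g M + b$g - b$c}"
  then have "(W$c) \<bullet> (column g M + z) + b $ c \<ge> (W$g) \<bullet> (column g M + z) + b $ g"
    by (simp add: inner_simps algebra_simps)
  then show "z \<in> errset M W b g" using assms
    unfolding errset_def misclassified_def by blast
qed

lemma pair_halfspace:
  fixes M W :: "real^'c::finite^'c" and b :: "real^'c"
  assumes "c \<noteq> g"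
  shows "\<exists>h a t. (a \<noteq> 0 \<or> t \<le> 0) \<and> (if a = 0 then 0 else max t 0 / norm a) \<le> norm (column g M - column c M) / 2
     \<and> {z. a \<bullet> z \<ge> t} \<subseteq> errset M W b h"
proof -
  define a where "a = W$c - W$g"
  define t where "t = (W$g - W$c) \<bullet> column g M + b$g - b$c"
  define t' where "t' = (W$c - W$g) \<bullet> column c M + b$c - b$g"
  define N where "N = norm (column g M - column c M)"
  have N0: "N \<ge> 0" by (simp add: N_def)
  have S1: "{z. a \<bullet> z \<ge> t} \<subseteq> errset M W b g"
    unfolding a_def t_def using half_sub[OF assms] .
  have S2: "{z. (-a) \<bullet> z \<ge> t'} \<subseteq> errset M W b c"
    unfolding a_def t'_def using half_sub[where c=g and g=c and M=M and W=W and b=b] assms by (simp add: minus_diff_eq)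
  have sum: "t + t' = a \<bullet> (column c M - column g M)"
    by (simp add: a_def t_def t'_def inner_simps algebra_simps)
  have CS: "a \<bullet> (column c M - column g M) \<le> norm a * N"
    unfolding N_def by (metis norm_cauchy_schwarz norm_minus_commute)
  show ?thesis
  proof (cases "t \<le> 0")
    case True
    then show ?thesis using S1 N0 by (intro exI[of _ g] exI[of _ a] exI[of _ t]) auto
  next
    case tpos: False
    show ?thesis
    proof (cases "t' \<le> 0")
      case True
      then show ?thesis using S2 N0 by (intro exI[of _ c] exI[of _ "-a"] exI[of _ t']) auto
    next
      case t'pos: False
      have an: "a \<noteq> 0" using sum tpos t'pos by auto
      then have na: "norm a > 0" by simp
      show ?thesis
      proof (cases "t \<le> t'")
        case True
        then have "t / norm a \<le> N / 2" using sum CS na by (simp add: field_simps)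
        then show ?thesis using S1 an tpos unfolding N_def
          by (intro exI[of _ g] exI[of _ a] exI[of _ t]) auto
      next
        case False
        then have "t' / norm a \<le> N / 2" using sum CS na by (simp add: field_simps)
        then show ?thesis using S2 an t'pos unfolding N_def
          by (intro exI[of _ c] exI[of _ "-a"] exI[of _ t']) auto
      qed
    qed
  qed
qed

lemma exp_from_balls:
  fixes M W :: "real^'c::finite^'c" and b :: "real^'c"
  assumes D: "D \<ge> 0"
    and B: "\<And>r. r > 0 \<Longrightarrow> \<exists>x0 g. norm x0 \<le> D + r \<and> ball x0 r \<subseteq> errset M W b g"
    and e: "\<epsilon> > 0"
  shows "eventually (\<lambda>\<sigma>. - (\<sigma>^2 * ln (err_prob \<sigma> M W b)) \<le> D^2/2 + \<epsilon>) (at_right 0)"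
proof (rule exponent_upper_ev[OF D _ e, where n = "CARD('c)"])
  fix r :: real assume r: "r > 0"
  obtain x0 g where x0: "norm x0 \<le> D + r/2" and sub: "ball x0 (r/2) \<subseteq> errset M W b g"
    using B[of "r/2"] r by auto
  define m where "m = measure lborel (ball x0 (r/2)) * (1 / sqrt (2 * pi)) ^ CARD('c) / real CARD('c)"
  have m0: "m > 0" unfolding m_def using content_ball_pos[of "r/2" x0] r by simp
  have "E \<sigma> \<ge> m * (1/\<sigma>)^CARD('c) * exp (- ((D + r)^2) / (2 * \<sigma>^2))" if s: "\<sigma> > 0"
    and E: "E = (\<lambda>\<sigma>. err_prob \<sigma> M W b)" for \<sigma> E
  proof -
    have sq: "1 / sqrt (2 * pi * \<sigma>\<^sup>2) = (1 / sqrt (2 * pi)) * (1/\<sigma>)"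
      using s by (simp add: real_sqrt_mult)
    have sq2: "(1 / sqrt (2 * pi)) ^ CARD('c) * (1/\<sigma>)^CARD('c) = (1 / sqrt (2 * pi * \<sigma>\<^sup>2)) ^ CARD('c)"
      by (simp only: sq power_mult_distrib)
    have "(norm x0 + r/2)^2 \<le> (D + r)^2" using x0 r by (intro power_mono) auto
    then have ex: "exp (- ((D + r)^2) / (2 * \<sigma>^2)) \<le> exp (- ((norm x0 + r/2)^2) / (2 * \<sigma>^2))"
      using s by (simp add: divide_right_mono)
    have "m * (1/\<sigma>)^CARD('c) * exp (- ((D + r)^2) / (2 * \<sigma>^2))
        \<le> m * (1/\<sigma>)^CARD('c) * exp (- ((norm x0 + r/2)^2) / (2 * \<sigma>^2))"
      using ex m0 s by (intro mult_left_mono) auto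
    also have "\<dots> = measure lborel (ball x0 (r/2)) * ((1 / sqrt (2 * pi * \<sigma>\<^sup>2)) ^ CARD('c) * exp (- ((norm x0 + r/2)^2) / (2 * \<sigma>^2))) / real CARD('c)"
      unfolding m_def sq2[symmetric] by (simp only: times_divide_eq_left times_divide_eq_right ac_simps)
    also have "\<dots> \<le> measure (gauss_vec \<sigma>) (errset M W b g) / real CARD('c)"
      by (intro divide_right_mono ball_lower[OF s _ sub]) (use r in auto)
    also have "\<dots> \<le> err_prob \<sigma> M W b" by (rule err_prob_ge[OF s])
    finally show ?thesis using E by simp
  qed
  then show "\<exists>m>0. \<forall>\<sigma>>0. m * (1/\<sigma>)^CARD('c) * exp (- ((D + r)^2) / (2 * \<sigma>^2)) \<le> err_prob \<sigma> M W b"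
    using m0 by blast
qed

lemma beta_pair_bound:
  fixes M W :: "real^'c::finite^'c" and b :: "real^'c"
  assumes "has_error_exponent M W b \<beta>" "c \<noteq> g"
  shows "\<beta> \<le> (norm (column g M - column c M))^2 / 8"
proof -
  obtain h a t where at: "a \<noteq> 0 \<or> t \<le> 0"
    and d: "(if a = 0 then 0 else max t 0 / norm a) \<le> norm (column g M - column c M) / 2"
    and sub: "{z. a \<bullet> z \<ge> t} \<subseteq> errset M W b h"
    using pair_halfspace[OF assms(2), of M W b] by blast
  define D where "D = norm (column g M - column c M) / 2"
  have D0: "D \<ge> 0" by (simp add: D_def)
  have B: "\<exists>x0 g. norm x0 \<le> D + r \<and> ball x0 r \<subseteq> errset M W b g" if r: "r > 0" for r
  proof -
    obtain x0 where "norm x0 \<le> (if a = 0 then 0 else max t 0 / norm a) + r" "ball x0 r \<subseteq> {z. a \<bullet> z \<ge> t}"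
      using half_ball[OF at r] by blast
    then show ?thesis using d sub unfolding D_def by (intro exI[of _ x0] exI[of _ h]) auto
  qed
  have "\<beta> \<le> D^2/2"
    by (rule limit_le_of_ev[OF assms(1)[unfolded has_error_exponent_def]])
       (rule exp_from_balls[OF D0 B], auto)
  then show ?thesis by (simp add: D_def power_divide)
qed



lemma etf_entry: "(simplex_etf :: real^'c::finite^'c) $ i $ j
   = sqrt (real CARD('c) / (real CARD('c) - 1)) * ((if i = j then 1 else 0) - 1 / real CARD('c))"
  by (simp add: simplex_etf_def mat_def)

lemma sum_delta2: fixes j k :: "'c::finite" shows "(\<Sum>i\<in>UNIV. (if i = j then 1 else 0) * (if i = k then 1 else 0) :: real) = (if j = k then 1 else 0)"
proof -
  have "(\<lambda>i. (if i = j then 1 else 0) * (if i = k then 1 else 0) :: real) = (\<lambda>i. if i = j then (if j = k then 1 else 0) else 0)"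
    by auto
  then have "(\<Sum>i\<in>UNIV. (if i = j then 1 else 0) * (if i = k then 1 else 0) :: real) = (\<Sum>i\<in>UNIV. if i = j then (if j = k then 1 else 0) else 0)"
    by (simp only:)
  also have "\<dots> = (if j = k then 1 else 0)" by (subst sum.delta) simp_all
  finally show ?thesis .
qed

lemma etf_gram:
  assumes C2: "CARD('c::finite) \<ge> 2"
  shows "column j (simplex_etf :: real^'c^'c) \<bullet> column k simplex_etf = (if j = k then 1 else - 1 / (real CARD('c) - 1))"
proof -
  define C where "C = real CARD('c)"
  define s where "s = sqrt (C / (C - 1))"
  have C1: "C > 1" using C2 by (simp add: C_def)
  have s2: "s * s = C / (C - 1)" using C1 by (simp add: s_def)
  have "column j (simplex_etf :: real^'c^'c) \<bullet> column k simplex_etf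
      = (\<Sum>i\<in>UNIV. (s * ((if i = j then 1 else 0) - 1 / C)) * (s * ((if i = k then 1 else 0) - 1 / C)))"
    by (simp add: inner_vec_def column_def etf_entry C_def s_def)
  also have "\<dots> = (s * s) * (\<Sum>i\<in>UNIV. (if i = j then 1 else 0) * (if i = k then 1 else 0)
        - (if i = j then 1 else 0) / C - (if i = k then 1 else 0) / C + 1 / (C * C))"
    by (simp add: sum_distrib_left algebra_simps)
  also have "\<dots> = (s * s) * ((if j = k then 1 else 0) - 1 / C - 1 / C + C / (C * C))"
    by (simp add: sum.distrib sum_subtractf sum_delta2 C_def if_distrib[of "\<lambda>x. x / _"] cong: if_cong)
  also have "\<dots> = (if j = k then 1 else - 1 / (C - 1))"
    using C1 unfolding s2 by (simp add: field_simps)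
  finally show ?thesis by (simp add: C_def)
qed

lemma dim_range_lt:
  fixes M :: "real^'c::finite^'c"
  assumes "M *v x = 0" "x \<noteq> 0"
  shows "dim (range (\<lambda>y. M *v y)) < CARD('c)"
proof (rule ccontr)
  assume "\<not> ?thesis"
  then have "dim (range (\<lambda>y. M *v y)) = DIM(real^'c)"
    using dim_subset_UNIV[of "range (\<lambda>y. M *v y)"] by simp
  then have "span (range (\<lambda>y. M *v y)) = UNIV" using dim_eq_full[of "range (\<lambda>y. M *v y)"] by simp
  moreover have "span (range (\<lambda>y. M *v y)) = range (\<lambda>y. M *v y)"
    by (simp add: span_linear_image)
  ultimately have "surj (\<lambda>y. M *v y)" by simp
  then have "inj (\<lambda>y. M *v y)"
    using linear_surjective_imp_injective[OF matrix_vector_mul_linear[of M]] by auto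
  then show False using assms by (metis injD matrix_vector_mult_0_right)
qed

lemma matrix_eq_columns:
  fixes A B :: "real^'n^'m"
  assumes "\<And>k. column k A = column k B"
  shows "A = B"
  using assms by (simp add: vec_eq_iff column_def)

lemma column_mult: "column j ((U::real^'n^'m) ** (E::real^'p^'n)) = U *v column j E"
  by (simp add: vec_eq_iff column_def matrix_matrix_mult_def matrix_vector_mult_def)

lemma etf_sym: "(simplex_etf :: real^'c::finite^'c) $ i $ j = simplex_etf $ j $ i"
  by (simp add: etf_entry eq_commute)

lemma etf_row: "((simplex_etf :: real^'c::finite^'c) ** transpose U) $ c = column c (U ** simplex_etf)"
  by (simp add: vec_eq_iff column_def matrix_matrix_mult_def transpose_def mult.commute etf_sym[of c])

lemma orth_inner:
  assumes "orthogonal_matrix (U::real^'n^'n)"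
  shows "(U *v x) \<bullet> (U *v y) = x \<bullet> y"
proof -
  have "orthogonal_transformation (\<lambda>x. U *v x)"
    using assms by (simp add: orthogonal_transformation_matrix)
  then show ?thesis by (simp add: orthogonal_transformation_def)
qed

lemma etf_factor:
  fixes M :: "real^'c::finite^'c"
  assumes C2: "CARD('c) \<ge> 2"
    and G: "\<And>j k. column j M \<bullet> column k M = (if j = k then 1 else - 1 / (real CARD('c) - 1))"
    and S0: "(\<Sum>j\<in>UNIV. column j M) = 0"
  shows "\<exists>U. orthogonal_matrix U \<and> M = U ** simplex_etf"
proof -
  define C where "C = real CARD('c)"
  define s where "s = sqrt (C / (C - 1))"
  have C1: "C > 1" using C2 by (simp add: C_def)
  have s0: "s > 0" using C1 by (simp add: s_def)
  have s2: "s * s = C / (C - 1)" using C1 by (simp add: s_def)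
  define one :: "real^'c" where "one = (\<chi> i. 1)"
  have one0: "one \<noteq> 0" by (simp add: one_def vec_eq_iff)
  have "M *v one = (\<Sum>j\<in>UNIV. column j M)"
    by (simp add: matrix_mult_sum one_def scalar_mult_eq_scaleR)
  then have "M *v one = 0" using S0 by simp
  then have "dim (range (\<lambda>y. M *v y)) < DIM(real^'c)"
    using dim_range_lt[OF _ one0] by simp
  then obtain v where v0: "v \<noteq> 0" and vo: "\<And>y. y \<in> span (range (\<lambda>y. M *v y)) \<Longrightarrow> orthogonal v y"
    using orthogonal_to_subspace_exists by blast
  define u where "u = (1 / norm v) *\<^sub>R v"
  have uu: "u \<bullet> u = 1" using v0 by (simp add: u_def power2_norm_eq_inner[symmetric] power2_eq_square)
  have uo: "u \<bullet> column j M = 0" for j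
  proof -
    have "column j M \<in> span (range (\<lambda>y. M *v y))"
      by (rule span_base) (metis matrix_vector_mult_basis rangeI)
    then have "v \<bullet> column j M = 0" using vo by (simp add: orthogonal_def)
    then show ?thesis by (simp add: u_def)
  qed
  define U :: "real^'c^'c" where "U = (\<chi> i j. (column j M $ i) / s + u $ i / sqrt C)"
  have colU: "column j U = (1 / s) *\<^sub>R column j M + (1 / sqrt C) *\<^sub>R u" for j
    by (simp add: U_def column_def vec_eq_iff)
  have ip: "column j U \<bullet> column k U = (if j = k then 1 else 0)" for j k
  proof -
    have uo': "column i M \<bullet> u = 0" for i by (metis inner_commute uo)
    have cc: "(1 / sqrt C) * (1 / sqrt C) = 1 / C" using C1 by simp
    have ss: "(1 / s) * (1 / s) = (C - 1) / C"
    proof -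
      have "(1 / s) * (1 / s) = 1 / (s * s)" by simp
      also have "\<dots> = (C - 1) / C" unfolding s2 by simp
      finally show ?thesis .
    qed
    have "column j U \<bullet> column k U = ((1 / s) * (1 / s)) * (column j M \<bullet> column k M) + ((1 / sqrt C) * (1 / sqrt C)) * (u \<bullet> u)"
      unfolding colU inner_add_left inner_add_right inner_scaleR_left inner_scaleR_right uo uo' by simp
    also have "\<dots> = (C - 1) / C * (column j M \<bullet> column k M) + 1 / C"
      unfolding cc ss uu by simp
    also have "\<dots> = (if j = k then 1 else 0)"
      using C1 by (cases "j = k") (simp_all add: G C_def[symmetric] field_simps)
    finally show ?thesis .
  qed
  have orth: "orthogonal_matrix U"
    unfolding orthogonal_matrix_orthonormal_columns
    using ip by (auto simp: norm_eq_1 orthogonal_def)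
  have "column k (U ** simplex_etf) = column k M" for k
  proof -
    have "column k (U ** simplex_etf) = (\<Sum>j\<in>UNIV. (s * ((if j = k then 1 else 0) - 1 / C)) *\<^sub>R column j U)"
      by (simp add: column_mult matrix_mult_sum column_def[of k simplex_etf] etf_entry scalar_mult_eq_scaleR C_def s_def)
    also have "\<dots> = (\<Sum>j\<in>UNIV. ((if j = k then 1 else 0) - 1 / C) *\<^sub>R column j M + (s / sqrt C * ((if j = k then 1 else 0) - 1 / C)) *\<^sub>R u)"
    proof (rule sum.cong[OF refl])
      fix j
      show "(s * ((if j = k then 1 else 0) - 1 / C)) *\<^sub>R column j U = ((if j = k then 1 else 0) - 1 / C) *\<^sub>R column j M + (s / sqrt C * ((if j = k then 1 else 0) - 1 / C)) *\<^sub>R u"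
        using s0 unfolding colU scaleR_add_right scaleR_scaleR by simp
    qed
    also have "\<dots> = (\<Sum>j\<in>UNIV. ((if j = k then 1 else 0) - 1 / C) *\<^sub>R column j M) + (\<Sum>j\<in>UNIV. s / sqrt C * ((if j = k then 1 else 0) - 1 / C)) *\<^sub>R u"
      by (simp add: sum.distrib scaleR_sum_left)
    also have "(\<Sum>j\<in>UNIV. ((if j = k then 1 else 0) - 1 / C) *\<^sub>R column j M) = (\<Sum>j\<in>UNIV. (if j = k then 1 else 0) *\<^sub>R column j M) - (1 / C) *\<^sub>R (\<Sum>j\<in>UNIV. column j M)"
      by (simp add: scaleR_left_diff_distrib sum_subtractf scaleR_sum_right)
    also have "\<dots> = column k M" by (simp add: S0 if_distrib[of "\<lambda>x. x *\<^sub>R _"] cong: if_cong)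
    also have "(\<Sum>j\<in>UNIV. s / sqrt C * ((if j = k then 1 else 0) - 1 / C)) = s / sqrt C * (\<Sum>j\<in>UNIV. ((if j = k then 1 else 0) - 1 / C))"
      by (rule sum_distrib_left[symmetric])
    also have "(\<Sum>j\<in>UNIV. ((if j = k then 1 else 0) - 1 / C)) = 0"
      using C1 by (simp add: sum_subtractf C_def)
    finally show ?thesis by simp
  qed
  then have "M = U ** simplex_etf" by (intro matrix_eq_columns) simp
  then show ?thesis using orth by blast
qed



lemma pair_sum:
  fixes \<mu> :: "'c::finite \<Rightarrow> real^'n"
  shows "(\<Sum>g\<in>UNIV. \<Sum>c\<in>UNIV. (norm (\<mu> g - \<mu> c))^2)
    = 2 * real CARD('c) * (\<Sum>g\<in>UNIV. (norm (\<mu> g))^2) - 2 * (norm (\<Sum>g\<in>UNIV. \<mu> g))^2"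
proof -
  have e: "(norm (\<mu> g - \<mu> c))^2 = \<mu> g \<bullet> \<mu> g + \<mu> c \<bullet> \<mu> c - 2 * (\<mu> g \<bullet> \<mu> c)" for g c
    by (simp add: power2_norm_eq_inner inner_diff_left inner_diff_right inner_commute)
  have "(\<Sum>g\<in>(UNIV::'c set). \<Sum>c\<in>(UNIV::'c set). (norm (\<mu> g - \<mu> c))^2)
      = (\<Sum>g\<in>(UNIV::'c set). \<Sum>c\<in>(UNIV::'c set). \<mu> g \<bullet> \<mu> g) + (\<Sum>g\<in>(UNIV::'c set). \<Sum>c\<in>(UNIV::'c set). \<mu> c \<bullet> \<mu> c) - 2 * (\<Sum>g\<in>(UNIV::'c set). \<Sum>c\<in>(UNIV::'c set). \<mu> g \<bullet> \<mu> c)"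
    by (simp add: e sum.distrib sum_subtractf sum_distrib_left)
  also have "(\<Sum>g\<in>(UNIV::'c set). \<Sum>c\<in>(UNIV::'c set). \<mu> g \<bullet> \<mu> c) = (\<Sum>g\<in>(UNIV::'c set). \<mu> g) \<bullet> (\<Sum>g\<in>(UNIV::'c set). \<mu> g)"
    by (simp add: inner_sum_left inner_sum_right) (rule sum.swap)
  also have "(\<Sum>g\<in>(UNIV::'c set). \<Sum>c\<in>(UNIV::'c set). \<mu> c \<bullet> \<mu> c) = (\<Sum>g\<in>(UNIV::'c set). \<Sum>c\<in>(UNIV::'c set). \<mu> g \<bullet> \<mu> g)"
    by (rule sum.swap)
  also have "(\<Sum>g\<in>(UNIV::'c set). \<Sum>c\<in>(UNIV::'c set). \<mu> g \<bullet> \<mu> g) = real CARD('c) * (\<Sum>g\<in>(UNIV::'c set). (norm (\<mu> g))^2)"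
    by (simp add: power2_norm_eq_inner sum_distrib_left)
  finally show ?thesis by (simp add: power2_norm_eq_inner)
qed

lemma sum_offdiag: "(\<Sum>c\<in>(UNIV::'c::finite set). if c = g then 0 else k) = (real CARD('c) - 1) * (k::real)"
proof -
  have "(\<Sum>c\<in>(UNIV::'c set). if c = g then 0 else k) = (\<Sum>c\<in>(UNIV::'c set). k - (if c = g then k else 0))"
    by (rule sum.cong) auto
  also have "\<dots> = real CARD('c) * k - k" by (simp add: sum_subtractf)
  finally show ?thesis by (simp add: algebra_simps)
qed

lemma two_elems:
  assumes "CARD('c::finite) \<ge> 2"
  shows "\<exists>g c :: 'c. g \<noteq> c"
proof (rule ccontr)
  assume "\<not> ?thesis"
  then have "(UNIV :: 'c set) = {undefined}" by auto
  then have "card (UNIV :: 'c set) = card {undefined :: 'c}" by (rule arg_cong)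
  then show False using assms by simp
qed

lemma sum_bounds:
  fixes M W :: "real^'c::finite^'c" and b :: "real^'c"
  assumes C2: "CARD('c) \<ge> 2" and N: "\<forall>c. norm (column c M) \<le> 1"
    and E: "has_error_exponent M W b \<beta>"
  shows "real CARD('c) * (real CARD('c) - 1) * (8 * \<beta>) \<le> (\<Sum>g\<in>UNIV. \<Sum>c\<in>UNIV. (norm (column g M - column c M))^2)"
    and "(\<Sum>g\<in>UNIV. \<Sum>c\<in>UNIV. (norm (column g M - column c M))^2) \<le> 2 * real CARD('c) * real CARD('c)"
    and "\<And>g c. g \<noteq> c \<Longrightarrow> 8 * \<beta> \<le> (norm (column g M - column c M))^2"
proof -
  show pb: "8 * \<beta> \<le> (norm (column g M - column c M))^2" if "g \<noteq> c" for g c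
    using beta_pair_bound[OF E, of c g] that by simp
  have "real CARD('c) * (real CARD('c) - 1) * (8 * \<beta>) = (\<Sum>g\<in>(UNIV::'c set). \<Sum>c\<in>UNIV. if c = g then 0 else 8 * \<beta>)"
    by (simp add: sum_offdiag)
  also have "\<dots> \<le> (\<Sum>g\<in>UNIV. \<Sum>c\<in>UNIV. (norm (column g M - column c M))^2)"
    by (intro sum_mono) (auto simp: pb)
  finally show "real CARD('c) * (real CARD('c) - 1) * (8 * \<beta>) \<le> (\<Sum>g\<in>UNIV. \<Sum>c\<in>UNIV. (norm (column g M - column c M))^2)" .
  have "(\<Sum>g\<in>(UNIV::'c set). (norm (column g M))^2) \<le> (\<Sum>g\<in>(UNIV::'c set). 1)"
    using N by (intro sum_mono) (simp add: power_le_one)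
  then show "(\<Sum>g\<in>UNIV. \<Sum>c\<in>UNIV. (norm (column g M - column c M))^2) \<le> 2 * real CARD('c) * real CARD('c)"
    unfolding pair_sum by (simp add: mult_left_mono) (smt (verit) mult_left_mono of_nat_0_le_iff zero_le_power2)
qed

lemma part1:
  fixes M W :: "real^'c::finite^'c" and b :: "real^'c"
  assumes C2: "CARD('c) \<ge> 2" and N: "\<forall>c. norm (column c M) \<le> 1"
    and E: "has_error_exponent M W b \<beta>"
  shows "\<beta> \<le> real CARD('c) / (real CARD('c) - 1) * (1/4)"
proof -
  have C1: "real CARD('c) > 1" using C2 by simp
  have "real CARD('c) * (real CARD('c) - 1) * (8 * \<beta>) \<le> 2 * real CARD('c) * real CARD('c)"
    using sum_bounds(1,2)[OF C2 N E] by linarith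
  then have "(real CARD('c) - 1) * (8 * \<beta>) \<le> 2 * real CARD('c)"
    using C1 by (simp add: mult.assoc)
  then show ?thesis using C1 by (simp add: field_simps)
qed

lemma part3_gram:
  fixes M W :: "real^'c::finite^'c" and b :: "real^'c"
  assumes C2: "CARD('c) \<ge> 2" and N: "\<forall>c. norm (column c M) \<le> 1"
    and E: "has_error_exponent M W b (real CARD('c) / (real CARD('c) - 1) * (1/4))"
  shows "\<And>j k. column j M \<bullet> column k M = (if j = k then 1 else - 1 / (real CARD('c) - 1))"
    and "(\<Sum>j\<in>UNIV. column j M) = 0"
proof -
  define C where "C = real CARD('c)"
  have C1: "C > 1" using C2 by (simp add: C_def)
  define k8 where "k8 = 8 * (C / (C - 1) * (1/4))"
  define S where "S = (\<Sum>g\<in>UNIV. \<Sum>c\<in>UNIV. (norm (column g M - column c M))^2)"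
  have k8C: "C * (C - 1) * k8 = 2 * C * C" using C1 by (simp add: k8_def field_simps)
  note sb = sum_bounds[OF C2 N E, folded C_def k8_def S_def]
  have SC: "S = 2 * C * C" using sb(1,2) k8C by (simp add: k8_def)
  define f where "f g c = (norm (column g M - column c M))^2 - (if c = g then 0 else k8)" for g c
  have f0: "f g c \<ge> 0" for g c
    using sb(3)[of g c] by (auto simp: f_def k8_def)
  have "(\<Sum>g\<in>UNIV. \<Sum>c\<in>UNIV. f g c) = S - (\<Sum>g\<in>(UNIV::'c set). \<Sum>c\<in>UNIV. if c = g then 0 else k8)"
    by (simp add: f_def S_def sum_subtractf)
  also have "\<dots> = 0" using k8C SC by (simp add: sum_offdiag C_def)
  finally have "(\<Sum>g\<in>UNIV. \<Sum>c\<in>UNIV. f g c) = 0" .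
  then have "\<forall>g\<in>UNIV. (\<Sum>c\<in>UNIV. f g c) = 0"
    by (subst sum_nonneg_eq_0_iff[symmetric]) (auto intro: sum_nonneg f0)
  then have fz: "f g c = 0" for g c
    using sum_nonneg_eq_0_iff[of UNIV "f g"] f0 by auto
  have ps: "S = 2 * C * (\<Sum>g\<in>UNIV. (norm (column g M))^2) - 2 * (norm (\<Sum>g\<in>UNIV. column g M))^2"
    unfolding S_def C_def by (rule pair_sum)
  have sn: "(\<Sum>g\<in>(UNIV::'c set). (norm (column g M))^2) \<le> C"
  proof -
    have "(\<Sum>g\<in>(UNIV::'c set). (norm (column g M))^2) \<le> (\<Sum>g\<in>(UNIV::'c set). 1)"
      using N by (intro sum_mono) (simp add: power_le_one)
    then show ?thesis by (simp add: C_def)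
  qed
  have t2: "2 * C * (\<Sum>g\<in>UNIV. (norm (column g M))^2) \<le> 2 * C * C"
    using sn C1 by simp
  have "(norm (\<Sum>g\<in>UNIV. column g M))^2 \<le> 0" using ps SC t2 by linarith
  then show S0: "(\<Sum>j\<in>UNIV. column j M) = 0" by simp
  have "(\<Sum>g\<in>(UNIV::'c set). (norm (column g M))^2) = C"
    using ps SC S0 C1 by simp
  then have "(\<Sum>g\<in>(UNIV::'c set). 1 - (norm (column g M))^2) = 0"
    by (simp add: sum_subtractf C_def)
  moreover have "\<forall>g\<in>UNIV. 1 - (norm (column g M))^2 \<ge> 0"
    using N by (simp add: power_le_one)
  ultimately have n1: "(norm (column g M))^2 = 1" for g
    using sum_nonneg_eq_0_iff[of UNIV "\<lambda>g. 1 - (norm (column g M))^2"] by auto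
  fix j k
  show "column j M \<bullet> column k M = (if j = k then 1 else - 1 / (real CARD('c) - 1))"
  proof (cases "j = k")
    case True
    then show ?thesis using n1[of k] by (simp add: power2_norm_eq_inner)
  next
    case False
    then have d: "(norm (column j M - column k M))^2 = k8" using fz[of j k] by (simp add: f_def)
    have "(norm (column j M - column k M))^2 = (norm (column j M))^2 + (norm (column k M))^2 - 2 * (column j M \<bullet> column k M)"
      by (simp add: power2_norm_eq_inner inner_diff_left inner_diff_right inner_commute)
    then have "column j M \<bullet> column k M = (2 - k8) / 2" using d n1 by simp
    also have "\<dots> = - 1 / (C - 1)" using C1 by (simp add: k8_def field_simps)
    finally show ?thesis using False by (simp add: C_def)
  qed
qed

lemma etf_exponent:
  fixes M W :: "real^'c::finite^'c"
  assumes C2: "CARD('c) \<ge> 2"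
    and G: "\<And>j k. column j M \<bullet> column k M = (if j = k then 1 else - 1 / (real CARD('c) - 1))"
    and R: "\<And>c. W $ c = column c M"
  shows "has_error_exponent M W 0 (real CARD('c) / (real CARD('c) - 1) * (1/4))"
proof -
  define C where "C = real CARD('c)"
  have C1: "C > 1" using C2 by (simp add: C_def)
  define \<kappa> where "\<kappa> = C / (C - 1)"
  define A where "A = 2 * C / (C - 1)"
  define \<beta>s where "\<beta>s = C / (C - 1) * (1/4)"
  have k0: "\<kappa> > 0" and A0: "A > 0" using C1 by (auto simp: \<kappa>_def A_def)
  have Gc: "column j M \<bullet> column k M = (if j = k then 1 else - 1 / (C - 1))" for j k
    using G by (simp add: C_def)
  have na: "(norm (W$c - W$g))^2 = A" if "g \<noteq> c" for g c
  proof -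
    have "(norm (W$c - W$g))^2 = column c M \<bullet> column c M + column g M \<bullet> column g M - 2 * (column c M \<bullet> column g M)"
      by (simp add: R power2_norm_eq_inner inner_diff_left inner_diff_right inner_commute)
    also have "\<dots> = A" using that C1 by (simp add: Gc A_def field_simps)
    finally show ?thesis .
  qed
  have an: "W$c - W$g \<noteq> 0" if "g \<noteq> c" for g c
    using na[OF that] A0 by auto
  have tk: "(W$g - W$c) \<bullet> column g M + (0::real^'c)$g - (0::real^'c)$c = \<kappa>" if "g \<noteq> c" for g c
    using that C1 by (simp add: R inner_diff_left Gc \<kappa>_def field_simps)
  obtain d where d: "C - 1 = d" "d > 0" using C1 by auto
  have "2 * A * \<beta>s = \<kappa>^2" using d(2) unfolding \<beta>s_def \<kappa>_def A_def d(1) by (simp add: field_simps power2_eq_square)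
  then have bs: "\<beta>s = \<kappa>^2 / (2 * A)" using A0 by (simp add: field_simps)
  have hs: "{z. (W$c - W$g) \<bullet> z \<ge> \<kappa>} \<subseteq> errset M W 0 g" if "g \<noteq> c" for g c
    using half_sub[of c g W M 0] that tk[OF that] by (simp add: eq_commute)
  obtain g c :: 'c where gc: "g \<noteq> c" using two_elems[OF C2] by blast
  define a where "a = W$c - W$g"
  have a0: "a \<noteq> 0" using an[OF gc] by (simp add: a_def)
  have naa: "(norm a)^2 = A" using na[OF gc] by (simp add: a_def)
  define D where "D = \<kappa> / norm a"
  have D0: "D \<ge> 0" using k0 by (simp add: D_def)
  have DB: "D^2 / 2 = \<beta>s" using naa bs by (simp add: D_def power_divide)
  have ballsub: "\<exists>x0. norm x0 \<le> D + r \<and> ball x0 r \<subseteq> errset M W 0 g" if r: "r > 0" for r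
  proof -
    obtain x0 where "norm x0 \<le> (if a = 0 then 0 else max \<kappa> 0 / norm a) + r" "ball x0 r \<subseteq> {z. a \<bullet> z \<ge> \<kappa>}"
      using half_ball[of a \<kappa> r] a0 r by blast
    then show ?thesis using a0 k0 hs[OF gc] unfolding D_def a_def by (intro exI[of _ x0]) auto
  qed
  have up: "eventually (\<lambda>\<sigma>. - (\<sigma>^2 * ln (err_prob \<sigma> M W 0)) \<le> \<beta>s + \<epsilon>) (at_right 0)" if e: "\<epsilon> > 0" for \<epsilon>
  proof -
    have "eventually (\<lambda>\<sigma>. - (\<sigma>^2 * ln (err_prob \<sigma> M W 0)) \<le> D^2/2 + \<epsilon>) (at_right 0)"
      by (rule exp_from_balls[OF D0 _ e]) (use ballsub in blast)
    then show ?thesis using DB by simp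
  qed
  have bnd: "0 < err_prob \<sigma> M W 0 \<and> err_prob \<sigma> M W 0 \<le> C * exp (- (\<beta>s / \<sigma>^2))" if s: "\<sigma> > 0" for \<sigma>
  proof
    interpret prob_space "gauss_vec \<sigma> :: (real^'c) measure" using gauss_prob s .
    obtain x0 where x0: "norm x0 \<le> D + 1" "ball x0 1 \<subseteq> errset M W 0 g" using ballsub[of 1] by auto
    have "0 < measure lborel (ball x0 1) * ((1 / sqrt (2 * pi * \<sigma>\<^sup>2)) ^ CARD('c) * exp (- ((norm x0 + 1)^2) / (2 * \<sigma>^2)))"
      using content_ball_pos[of 1 x0] s by simp
    also have "\<dots> \<le> measure (gauss_vec \<sigma>) (errset M W 0 g)"
      by (rule ball_lower[OF s _ x0(2)]) auto
    finally have "0 < measure (gauss_vec \<sigma>) (errset M W 0 g) / real CARD('c)" by simp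
    also have "\<dots> \<le> err_prob \<sigma> M W 0" by (rule err_prob_ge[OF s])
    finally show "0 < err_prob \<sigma> M W 0" .
    have each: "measure (gauss_vec \<sigma>) (errset M W 0 g') \<le> C * exp (- (\<beta>s / \<sigma>^2))" for g'
    proof -
      have sub: "errset M W 0 g' \<subseteq> (\<Union>c'\<in>UNIV - {g'}. {z. (W$c' - W$g') \<bullet> z \<ge> \<kappa>})"
      proof
        fix z assume "z \<in> errset M W 0 g'"
        then obtain c' where c': "c' \<noteq> g'" "(W $ c') \<bullet> (column g' M + z) + (0::real^'c) $ c' \<ge> (W $ g') \<bullet> (column g' M + z) + (0::real^'c) $ g'"
          unfolding errset_def misclassified_def by blast
        then have "(W$c' - W$g') \<bullet> z \<ge> (W$g' - W$c') \<bullet> column g' M + (0::real^'c)$g' - (0::real^'c)$c'"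
          by (simp add: inner_simps algebra_simps)
        then have "(W$c' - W$g') \<bullet> z \<ge> \<kappa>" using tk[of g' c'] c'(1) by simp
        then show "z \<in> (\<Union>c'\<in>UNIV - {g'}. {z. (W$c' - W$g') \<bullet> z \<ge> \<kappa>})" using c'(1) by auto
      qed
      have "measure (gauss_vec \<sigma>) (errset M W 0 g') \<le> measure (gauss_vec \<sigma>) (\<Union>c'\<in>UNIV - {g'}. {z. (W$c' - W$g') \<bullet> z \<ge> \<kappa>})"
        by (rule finite_measure_mono[OF sub]) measurable
      also have "\<dots> \<le> (\<Sum>c'\<in>UNIV - {g'}. measure (gauss_vec \<sigma>) {z. (W$c' - W$g') \<bullet> z \<ge> \<kappa>})"
        by (rule measure_UNION_le) auto
      also have "\<dots> \<le> (\<Sum>c'\<in>UNIV - {g'}. exp (- (\<beta>s / \<sigma>^2)))"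
      proof (rule sum_mono)
        fix c' assume "c' \<in> UNIV - {g'}"
        then have c': "g' \<noteq> c'" by auto
        have "measure (gauss_vec \<sigma>) {z. (W$c' - W$g') \<bullet> z \<ge> \<kappa>} \<le> exp (- (\<kappa>^2 / (2 * (norm (W$c' - W$g'))^2 * \<sigma>^2)))"
          by (rule chernoff_opt[OF s an[OF c']]) (use k0 in simp)
        also have "\<kappa>^2 / (2 * (norm (W$c' - W$g'))^2 * \<sigma>^2) = \<beta>s / \<sigma>^2"
          using na[OF c'] bs s by simp
        finally show "measure (gauss_vec \<sigma>) {z. (W$c' - W$g') \<bullet> z \<ge> \<kappa>} \<le> exp (- (\<beta>s / \<sigma>^2))" .
      qed
      also have "\<dots> \<le> (\<Sum>c'\<in>(UNIV::'c set). exp (- (\<beta>s / \<sigma>^2)))"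
        by (rule sum_mono2) auto
      also have "\<dots> = C * exp (- (\<beta>s / \<sigma>^2))" by (simp add: C_def)
      finally show ?thesis .
    qed
    have "err_prob \<sigma> M W 0 \<le> (\<Sum>g'\<in>(UNIV::'c set). C * exp (- (\<beta>s / \<sigma>^2))) / C"
      unfolding err_prob_def C_def[symmetric]
      using each C1 unfolding errset_def by (intro divide_right_mono sum_mono) auto
    also have "\<dots> = C * exp (- (\<beta>s / \<sigma>^2))" using C1 by (simp add: C_def)
    finally show "err_prob \<sigma> M W 0 \<le> C * exp (- (\<beta>s / \<sigma>^2))" .
  qed
  have lo: "eventually (\<lambda>\<sigma>. - (\<sigma>^2 * ln (err_prob \<sigma> M W 0)) \<ge> \<beta>s - \<epsilon>) (at_right 0)" if e: "\<epsilon> > 0" for \<epsilon>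
    using exponent_lower_ev[of C "\<lambda>\<sigma>. err_prob \<sigma> M W 0" \<beta>s \<epsilon>] C1 bnd e by auto
  have "((\<lambda>\<sigma>. - (\<sigma>^2 * ln (err_prob \<sigma> M W 0))) \<longlongrightarrow> \<beta>s) (at_right 0)"
    by (rule limit_of_ev[OF up lo])
  then show ?thesis unfolding has_error_exponent_def \<beta>s_def C_def .
qed


theorem theorem5:
  assumes C2: "CARD('c::finite) \<ge> 2"
  defines "\<beta>s \<equiv> real CARD('c) / (real CARD('c) - 1) * (1/4)"
  shows "(\<forall>(M::real^'c^'c) W b \<beta>. (\<forall>c. norm (column c M) \<le> 1) \<longrightarrow>
            has_error_exponent M W b \<beta> \<longrightarrow> \<beta> \<le> \<beta>s)
    \<and> has_error_exponent (simplex_etf :: real^'c^'c) simplex_etf 0 \<beta>s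
    \<and> (\<forall>(M::real^'c^'c) W b. (\<forall>c. norm (column c M) \<le> 1) \<longrightarrow>
            has_error_exponent M W b \<beta>s \<longrightarrow>
            (\<exists>U. orthogonal_matrix U \<and> M = U ** simplex_etf))
    \<and> (\<forall>U::real^'c^'c. orthogonal_matrix U \<longrightarrow>
            has_error_exponent (U ** simplex_etf) (simplex_etf ** transpose U) 0 \<beta>s)"
proof -
  have P1: "\<forall>(M::real^'c^'c) W b \<beta>. (\<forall>c. norm (column c M) \<le> 1) \<longrightarrow>
            has_error_exponent M W b \<beta> \<longrightarrow> \<beta> \<le> \<beta>s"
    using part1[OF C2] unfolding \<beta>s_def by blast
  have P4: "\<forall>U::real^'c^'c. orthogonal_matrix U \<longrightarrow>
            has_error_exponent (U ** simplex_etf) (simplex_etf ** transpose U) 0 \<beta>s"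
  proof (intro allI impI)
    fix U :: "real^'c^'c" assume U: "orthogonal_matrix U"
    show "has_error_exponent (U ** simplex_etf) (simplex_etf ** transpose U) 0 \<beta>s"
      unfolding \<beta>s_def
    proof (rule etf_exponent[OF C2])
      fix j k :: 'c
      show "column j (U ** simplex_etf) \<bullet> column k (U ** simplex_etf) = (if j = k then 1 else - 1 / (real CARD('c) - 1))"
        by (simp add: column_mult orth_inner[OF U] etf_gram[OF C2])
    next
      fix c :: 'c
      show "(simplex_etf ** transpose U) $ c = column c (U ** simplex_etf)"
        by (rule etf_row)
    qed
  qed
  have P2: "has_error_exponent (simplex_etf :: real^'c^'c) simplex_etf 0 \<beta>s"
    using P4[rule_format, OF orthogonal_matrix_id] by (simp add: transpose_mat)
  have P3: "\<forall>(M::real^'c^'c) W b. (\<forall>c. norm (column c M) \<le> 1) \<longrightarrow>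
            has_error_exponent M W b \<beta>s \<longrightarrow>
            (\<exists>U. orthogonal_matrix U \<and> M = U ** simplex_etf)"
  proof (intro allI impI)
    fix M W :: "real^'c^'c" and b :: "real^'c"
    assume N: "\<forall>c. norm (column c M) \<le> 1" and E: "has_error_exponent M W b \<beta>s"
    note g = part3_gram[OF C2 N E[unfolded \<beta>s_def]]
    show "\<exists>U. orthogonal_matrix U \<and> M = U ** simplex_etf"
      by (rule etf_factor[OF C2 g(1) g(2)])
  qed
  show ?thesis using P1 P2 P3 P4 by blast
qed

end
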